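(* Let $\delta:C_+\oplus C_-\to C_+\oplus C_-$, $C_\pm=\mathbb{Z}_D^n$, be a good boundary operator (with respect to $n'\le n$). Let $\mathcal{V}\le C$ be spanned by the first $n'$ standard basis vectors of $C_+$ and the first $n'$ standard basis vectors of $C_-$, and $\mathcal{V}^>$ by the remaining standard basis vectors; let $W$ be the projection onto $\mathcal{V}$ along $\mathcal{V}^>$, $S^>=W\delta(\mathcal{V}^>)$, $\mathcal{V}'=\mathcal{V}/S^>$, $\varphi(h)=Wh+S^>$, and $\delta'$, $P'$ the induced maps on $\mathcal{V}'$ given by $\delta'(x+S^>)=\varphi(\delta x)$, $P'(x+S^>)=\varphi(Px)$. Write $\mathcal{V}'_\pm$ for the $\pm1$ eigenspaces of $P'$ and $\delta'_{-+}:\mathcal{V}'_+\to\mathcal{V}'_-$, $\delta'_{+-}:\mathcal{V}'_-\to\mathcal{V}'_+$ for the components of $\delta'$ (and similarly $\delta_{-+}:C_+\to C_-$, $\delta_{+-}:C_-\to C_+$). Then $\dim\mathcal{V}'_\pm=2n'-n$ and $\dim\ker\delta'_{-+}=\dim\ker\delta_{-+}-(n-n')$, $\dim\operatorname{im}\delta'_{-+}=\dim\operatorname{im}\delta_{-+}-(n-n')$, and similarly $\dim\ker\delta'_{+-}=\dim\ker\delta_{+-}-(n-n')$, $\dim\operatorname{im}\delta'_{+-}=\dim\operatorname{im}\delta_{+-}-(n-n')$.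
   Context: $D$ is an odd prime, $\mathbb{Z}_D$ the field with $D$ elements. $C=C_+\oplus C_-$ with $C_\pm=\mathbb{Z}_D^n$ and $P=\begin{bmatrix}I_n&0\\0&-I_n\end{bmatrix}$. A boundary operator is a linear map $\delta:C\to C$ with $\delta^2=0$ and $\delta P+P\delta=0$ (so $\delta=\begin{bmatrix}0&\delta_{+-}\\ \delta_{-+}&0\end{bmatrix}$). Fix $n'\le n$. Such a $\delta$ is called good if neither $\ker\delta\cap C_+$ nor $\ker\delta\cap C_-$ contains a nonzero vector supported on the last $n-n'$ coordinates (of $C_+$, resp. $C_-$). *)

theory Defs
  imports Main HOL.Vector_Spaces "HOL-Library.Function_Algebras" "HOL-Library.Product_Plus" "HOL-Computational_Algebra.Primes"
begin

text \<open>Vectors of \<open>C_\<pm> = Z_D^n\<close> are modelled as functions \<open>nat \<Rightarrow> 'a\<close> vanishing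
  outside \<open>{0..<n}\<close>; an element of \<open>C = C_+ \<oplus> C_-\<close> is a pair \<open>(u, w)\<close> with
  \<open>u \<in> C_+\<close> and \<open>w \<in> C_-\<close>.\<close>

type_synonym 'a cvec = "(nat \<Rightarrow> 'a) \<times> (nat \<Rightarrow> 'a)"

definition Cpm :: "nat \<Rightarrow> (nat \<Rightarrow> 'a::zero) set" where
  "Cpm n = {u. \<forall>i\<ge>n. u i = 0}"

definition Ctot :: "nat \<Rightarrow> 'a::zero cvec set" where
  "Ctot n = Cpm n \<times> Cpm n"

definition scaleF :: "'a::times \<Rightarrow> (nat \<Rightarrow> 'a) \<Rightarrow> (nat \<Rightarrow> 'a)" where
  "scaleF c u = (\<lambda>i. c * u i)"

definition scaleC :: "'a::times \<Rightarrow> 'a cvec \<Rightarrow> 'a cvec" where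
  "scaleC c x = (scaleF c (fst x), scaleF c (snd x))"

definition Pop :: "'a::uminus cvec \<Rightarrow> 'a cvec" where
  "Pop x = (fst x, - snd x)"

definition linear_on ::
  "('a \<Rightarrow> 'b \<Rightarrow> 'b) \<Rightarrow> ('a \<Rightarrow> 'c \<Rightarrow> 'c) \<Rightarrow> 'b::plus set \<Rightarrow> ('b \<Rightarrow> 'c::plus) \<Rightarrow> bool" where
  "linear_on s1 s2 A f \<longleftrightarrow>
     (\<forall>x\<in>A. \<forall>y\<in>A. f (x + y) = f x + f y) \<and> (\<forall>c. \<forall>x\<in>A. f (s1 c x) = s2 c (f x))"

definition boundary_op :: "nat \<Rightarrow> ('a::field cvec \<Rightarrow> 'a cvec) \<Rightarrow> bool" where
  "boundary_op n \<delta> \<longleftrightarrow>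
     \<delta> ` Ctot n \<subseteq> Ctot n \<and> linear_on scaleC scaleC (Ctot n) \<delta> \<and>
     (\<forall>x\<in>Ctot n. \<delta> (\<delta> x) = 0) \<and>
     (\<forall>x\<in>Ctot n. \<delta> (Pop x) + Pop (\<delta> x) = 0)"

definition good :: "nat \<Rightarrow> nat \<Rightarrow> ('a::field cvec \<Rightarrow> 'a cvec) \<Rightarrow> bool" where
  "good n n' \<delta> \<longleftrightarrow> boundary_op n \<delta> \<and>
     (\<forall>u\<in>Cpm n. (\<forall>i<n'. u i = 0) \<and> \<delta> (u, 0) = 0 \<longrightarrow> u = 0) \<and>
     (\<forall>w\<in>Cpm n. (\<forall>i<n'. w i = 0) \<and> \<delta> (0, w) = 0 \<longrightarrow> w = 0)"

definition dmp :: "('a::zero cvec \<Rightarrow> 'a cvec) \<Rightarrow> (nat \<Rightarrow> 'a) \<Rightarrow> (nat \<Rightarrow> 'a)" where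
  "dmp \<delta> u = snd (\<delta> (u, 0))"

definition dpm :: "('a::zero cvec \<Rightarrow> 'a cvec) \<Rightarrow> (nat \<Rightarrow> 'a) \<Rightarrow> (nat \<Rightarrow> 'a)" where
  "dpm \<delta> w = fst (\<delta> (0, w))"

definition Vsp :: "nat \<Rightarrow> 'a::zero cvec set" where
  "Vsp n' = Cpm n' \<times> Cpm n'"

definition Vgt :: "nat \<Rightarrow> nat \<Rightarrow> 'a::zero cvec set" where
  "Vgt n n' = {x \<in> Ctot n. \<forall>i<n'. fst x i = 0 \<and> snd x i = 0}"

definition Wproj :: "nat \<Rightarrow> 'a::zero cvec \<Rightarrow> 'a cvec" where
  "Wproj n' x = ((\<lambda>i. if i < n' then fst x i else 0), (\<lambda>i. if i < n' then snd x i else 0))"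

definition Sgt :: "nat \<Rightarrow> nat \<Rightarrow> ('a::zero cvec \<Rightarrow> 'a cvec) \<Rightarrow> 'a cvec set" where
  "Sgt n n' \<delta> = Wproj n' ` \<delta> ` Vgt n n'"

text \<open>\<open>\<pi>\<close> realises the quotient \<open>\<V>' = \<V> / S^>\<close>: a surjective linear map from \<open>\<V>\<close>
  onto the vector space \<open>'q\<close> (scalar multiplication \<open>scaleQ\<close>) with kernel \<open>S^>\<close>.\<close>
definition quotient_map ::
  "nat \<Rightarrow> nat \<Rightarrow> ('a::field cvec \<Rightarrow> 'a cvec) \<Rightarrow> ('a \<Rightarrow> 'q::ab_group_add \<Rightarrow> 'q) \<Rightarrow> ('a cvec \<Rightarrow> 'q) \<Rightarrow> bool" where
  "quotient_map n n' \<delta> scaleQ \<pi> \<longleftrightarrow>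
     vector_space scaleQ \<and> linear_on scaleC scaleQ (Vsp n') \<pi> \<and> \<pi> ` Vsp n' = UNIV \<and>
     (\<forall>x\<in>Vsp n'. \<pi> x = 0 \<longleftrightarrow> x \<in> Sgt n n' \<delta>)"

definition rep :: "nat \<Rightarrow> ('a::zero cvec \<Rightarrow> 'q) \<Rightarrow> 'q \<Rightarrow> 'a cvec" where
  "rep n' \<pi> q = (SOME x. x \<in> Vsp n' \<and> \<pi> x = q)"

definition phi :: "nat \<Rightarrow> ('a::zero cvec \<Rightarrow> 'q) \<Rightarrow> 'a cvec \<Rightarrow> 'q" where
  "phi n' \<pi> h = \<pi> (Wproj n' h)"

definition dq :: "nat \<Rightarrow> ('a::zero cvec \<Rightarrow> 'a cvec) \<Rightarrow> ('a cvec \<Rightarrow> 'q) \<Rightarrow> 'q \<Rightarrow> 'q" where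
  "dq n' \<delta> \<pi> q = phi n' \<pi> (\<delta> (rep n' \<pi> q))"

definition Pq :: "nat \<Rightarrow> ('a::{zero,uminus} cvec \<Rightarrow> 'q) \<Rightarrow> 'q \<Rightarrow> 'q" where
  "Pq n' \<pi> q = phi n' \<pi> (Pop (rep n' \<pi> q))"

definition Vq_plus :: "nat \<Rightarrow> ('a::{zero,uminus} cvec \<Rightarrow> 'q::uminus) \<Rightarrow> 'q set" where
  "Vq_plus n' \<pi> = {q. Pq n' \<pi> q = q}"

definition Vq_minus :: "nat \<Rightarrow> ('a::{zero,uminus} cvec \<Rightarrow> 'q::uminus) \<Rightarrow> 'q set" where
  "Vq_minus n' \<pi> = {q. Pq n' \<pi> q = - q}"

definition proj_plus :: "('a::field \<Rightarrow> 'q \<Rightarrow> 'q) \<Rightarrow> nat \<Rightarrow> ('a cvec \<Rightarrow> 'q::ab_group_add) \<Rightarrow> 'q \<Rightarrow> 'q" where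
  "proj_plus scaleQ n' \<pi> q = scaleQ (inverse 2) (q + Pq n' \<pi> q)"

definition proj_minus :: "('a::field \<Rightarrow> 'q \<Rightarrow> 'q) \<Rightarrow> nat \<Rightarrow> ('a cvec \<Rightarrow> 'q::ab_group_add) \<Rightarrow> 'q \<Rightarrow> 'q" where
  "proj_minus scaleQ n' \<pi> q = scaleQ (inverse 2) (q - Pq n' \<pi> q)"

definition dq_mp :: "('a::field \<Rightarrow> 'q \<Rightarrow> 'q) \<Rightarrow> nat \<Rightarrow> ('a cvec \<Rightarrow> 'a cvec) \<Rightarrow> ('a cvec \<Rightarrow> 'q::ab_group_add) \<Rightarrow> 'q \<Rightarrow> 'q" where
  "dq_mp scaleQ n' \<delta> \<pi> q = proj_minus scaleQ n' \<pi> (dq n' \<delta> \<pi> q)"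

definition dq_pm :: "('a::field \<Rightarrow> 'q \<Rightarrow> 'q) \<Rightarrow> nat \<Rightarrow> ('a cvec \<Rightarrow> 'a cvec) \<Rightarrow> ('a cvec \<Rightarrow> 'q::ab_group_add) \<Rightarrow> 'q \<Rightarrow> 'q" where
  "dq_pm scaleQ n' \<delta> \<pi> q = proj_plus scaleQ n' \<pi> (dq n' \<delta> \<pi> q)"

end

theory Submission
  imports Defs "HOL-Library.FuncSet"
begin


definition trunc :: "nat \<Rightarrow> (nat \<Rightarrow> 'a::zero) \<Rightarrow> (nat \<Rightarrow> 'a)" where
  "trunc k u = (\<lambda>i. if i < k then u i else 0)"

definition Hi :: "nat \<Rightarrow> nat \<Rightarrow> (nat \<Rightarrow> 'a::zero) set" where
  "Hi n n' = {u \<in> Cpm n. \<forall>i<n'. u i = 0}"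

lemma Cpm_add: "u \<in> Cpm n \<Longrightarrow> v \<in> Cpm n \<Longrightarrow> (u::nat\<Rightarrow>'a::monoid_add) + v \<in> Cpm n"
  by (simp add: Cpm_def)
lemma Cpm_diff: "u \<in> Cpm n \<Longrightarrow> v \<in> Cpm n \<Longrightarrow> (u::nat\<Rightarrow>'a::ab_group_add) - v \<in> Cpm n"
  by (simp add: Cpm_def)
lemma Cpm_uminus: "u \<in> Cpm n \<Longrightarrow> - (u::nat\<Rightarrow>'a::ab_group_add) \<in> Cpm n"
  by (simp add: Cpm_def)
lemma Cpm_zero[simp]: "0 \<in> Cpm n"
  by (simp add: Cpm_def)
lemma Cpm_scale: "u \<in> Cpm n \<Longrightarrow> scaleF (c::'a::field) u \<in> Cpm n"
  by (simp add: Cpm_def scaleF_def)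
lemma Cpm_mono: "k \<le> n \<Longrightarrow> u \<in> Cpm k \<Longrightarrow> u \<in> Cpm n"
  by (simp add: Cpm_def)
lemma trunc_Cpm[simp]: "trunc k u \<in> Cpm k"
  by (simp add: Cpm_def trunc_def)
lemma trunc_id: "u \<in> Cpm k \<Longrightarrow> trunc k u = u"
  by (auto simp: Cpm_def trunc_def fun_eq_iff)
lemma trunc_add: "trunc k (u + v) = trunc k u + trunc k (v::nat \<Rightarrow> 'a::monoid_add)"
  by (auto simp: trunc_def fun_eq_iff)
lemma trunc_diff: "trunc k (u - v) = trunc k u - trunc k (v::nat \<Rightarrow> 'a::group_add)"
  by (auto simp: trunc_def fun_eq_iff)
lemma trunc_uminus: "trunc k (- v) = - trunc k (v::nat \<Rightarrow> 'a::group_add)"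
  by (auto simp: trunc_def fun_eq_iff)
lemma trunc_zero[simp]: "trunc k 0 = 0"
  by (auto simp: trunc_def fun_eq_iff)
lemma trunc_Hi: "u \<in> Hi n k \<Longrightarrow> trunc k u = 0"
  by (auto simp: trunc_def Hi_def fun_eq_iff)
lemma Hi_Cpm: "u \<in> Hi n k \<Longrightarrow> u \<in> Cpm n"
  by (simp add: Hi_def)
lemma Hi_zero[simp]: "0 \<in> Hi n k"
  by (simp add: Hi_def)
lemma Hi_diff: "u \<in> Hi n k \<Longrightarrow> v \<in> Hi n k \<Longrightarrow> (u::nat\<Rightarrow>'a::ab_group_add) - v \<in> Hi n k"
  by (simp add: Hi_def Cpm_def)
lemma Hi_add: "u \<in> Hi n k \<Longrightarrow> v \<in> Hi n k \<Longrightarrow> (u::nat\<Rightarrow>'a::ab_group_add) + v \<in> Hi n k"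
  by (simp add: Hi_def Cpm_def)
lemma Hi_uminus: "u \<in> Hi n k \<Longrightarrow> - (u::nat\<Rightarrow>'a::ab_group_add) \<in> Hi n k"
  by (simp add: Hi_def Cpm_def)
lemma Hi_rest: "u \<in> Cpm n \<Longrightarrow> (u::nat\<Rightarrow>'a::ab_group_add) - trunc k u \<in> Hi n k"
  by (auto simp: Hi_def Cpm_def trunc_def)
lemma trunc0_Hi: "u \<in> Cpm n \<Longrightarrow> trunc k u = 0 \<Longrightarrow> u \<in> Hi n k"
proof -
  assume u: "u \<in> Cpm n" and t: "trunc k u = 0"
  have "u i = 0" if "i < k" for i
  proof -
    have "trunc k u i = 0" using t by simp
    thus ?thesis using that by (simp add: trunc_def)
  qed
  thus ?thesis using u by (simp add: Hi_def)
qed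

lemma card_supp:
  assumes "finite I" "finite (UNIV::'a set)"
  shows "card {u::nat\<Rightarrow>'a::zero. \<forall>i. i \<notin> I \<longrightarrow> u i = 0} = card (UNIV::'a set) ^ card I"
proof -
  have "bij_betw (\<lambda>u. restrict u I) {u::nat\<Rightarrow>'a. \<forall>i. i \<notin> I \<longrightarrow> u i = 0} (I \<rightarrow>\<^sub>E (UNIV::'a set))"
  proof (rule bij_betwI[where g="\<lambda>c i. if i \<in> I then c i else 0"])
    show "\<And>x. x \<in> {u. \<forall>i. i \<notin> I \<longrightarrow> u i = 0} \<Longrightarrow>
         (\<lambda>i. if i \<in> I then restrict x I i else 0) = x" by (auto simp: fun_eq_iff)
    show "\<And>y. y \<in> I \<rightarrow>\<^sub>E UNIV \<Longrightarrow> restrict (\<lambda>i. if i \<in> I then y i else 0) I = y"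
      by (auto simp: fun_eq_iff PiE_def extensional_def)
  qed auto
  hence "card {u::nat\<Rightarrow>'a. \<forall>i. i \<notin> I \<longrightarrow> u i = 0} = card (I \<rightarrow>\<^sub>E (UNIV::'a set))"
    by (rule bij_betw_same_card)
  thus ?thesis using assms by (simp add: card_PiE)
qed

lemma card_Cpm: "finite (UNIV::'a set) \<Longrightarrow> card (Cpm k :: (nat \<Rightarrow> 'a::zero) set) = card (UNIV::'a set) ^ k"
proof -
  assume f: "finite (UNIV::'a set)"
  have "Cpm k = {u::nat\<Rightarrow>'a. \<forall>i. i \<notin> {0..<k} \<longrightarrow> u i = 0}" by (auto simp: Cpm_def)
  thus ?thesis using card_supp[of "{0..<k}", OF _ f] by simp
qed

lemma card_Hi: "finite (UNIV::'a set) \<Longrightarrow> card (Hi n k :: (nat \<Rightarrow> 'a::zero) set) = card (UNIV::'a set) ^ (n - k)"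
proof -
  assume f: "finite (UNIV::'a set)"
  have "Hi n k = {u::nat\<Rightarrow>'a. \<forall>i. i \<notin> {k..<n} \<longrightarrow> u i = 0}" by (auto simp: Hi_def Cpm_def)
  thus ?thesis using card_supp[of "{k..<n}", OF _ f] by simp
qed

lemma finite_Cpm: "finite (UNIV::'a set) \<Longrightarrow> finite (Cpm k :: (nat \<Rightarrow> 'a::zero) set)"
proof -
  assume f: "finite (UNIV::'a set)"
  have "Cpm k = (\<lambda>c i. if i \<in> {0..<k} then c i else 0) ` ({0..<k} \<rightarrow>\<^sub>E (UNIV::'a set))"
  proof (rule set_eqI, rule iffI)
    fix u assume "u \<in> (Cpm k :: (nat \<Rightarrow> 'a) set)"
    thus "u \<in> (\<lambda>c i. if i \<in> {0..<k} then c i else 0) ` ({0..<k} \<rightarrow>\<^sub>E (UNIV::'a set))"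
      by (intro image_eqI[where x="restrict u {0..<k}"]) (auto simp: Cpm_def fun_eq_iff)
  qed (auto simp: Cpm_def)
  thus ?thesis using f by (simp add: finite_PiE)
qed

lemma card_additive:
  fixes f :: "'b::ab_group_add \<Rightarrow> 'c::ab_group_add"
  assumes fV: "finite V" and add: "\<And>x y. x \<in> V \<Longrightarrow> y \<in> V \<Longrightarrow> x + y \<in> V"
    and diff: "\<And>x y. x \<in> V \<Longrightarrow> y \<in> V \<Longrightarrow> x - y \<in> V"
    and fadd: "\<And>x y. x \<in> V \<Longrightarrow> y \<in> V \<Longrightarrow> f (x + y) = f x + f y"
  shows "card V = card (f ` V) * card {x\<in>V. f x = 0}"
proof -
  let ?K = "{x\<in>V. f x = 0}"
  have fdiff: "f (x - y) = f x - f y" if "x \<in> V" "y \<in> V" for x y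
    using fadd[OF diff[OF that] that(2)] by (simp add: algebra_simps)
  have V: "V = (\<Union>y\<in>f ` V. {x\<in>V. f x = y})" by auto
  have "card (\<Union>y\<in>f ` V. {x\<in>V. f x = y}) = (\<Sum>y\<in>f ` V. card {x\<in>V. f x = y})"
    by (rule card_UN_disjoint) (use fV in auto)
  also have "\<dots> = (\<Sum>y\<in>f ` V. card ?K)"
  proof (rule sum.cong[OF refl])
    fix y assume "y \<in> f ` V"
    then obtain x0 where x0: "x0 \<in> V" "f x0 = y" by auto
    have "bij_betw (\<lambda>x. x - x0) {x\<in>V. f x = y} ?K"
    proof (rule bij_betwI[where g="\<lambda>k. k + x0"])
      show "(\<lambda>x. x - x0) \<in> {x \<in> V. f x = y} \<rightarrow> ?K" using x0 fdiff diff by auto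
      show "(\<lambda>k. k + x0) \<in> ?K \<rightarrow> {x \<in> V. f x = y}" using x0 fadd add by auto
    qed auto
    thus "card {x\<in>V. f x = y} = card ?K" by (rule bij_betw_same_card)
  qed
  also have "\<dots> = card (f ` V) * card ?K" by simp
  finally have X: "card (\<Union>y\<in>f ` V. {x\<in>V. f x = y}) = card (f ` V) * card ?K" .
  show ?thesis using arg_cong[OF V, of card] X by (rule trans)
qed

context vector_space begin
lemma card_subspace_pow:
  assumes fin: "finite (UNIV::'a set)" and S: "subspace S" and fS: "finite S"
  shows "card S = card (UNIV::'a set) ^ dim S"
proof -
  obtain B where B: "B \<subseteq> S" "independent B" "S \<subseteq> span B" "card B = dim S"
    by (rule basis_exists)
  have fB: "finite B" using B(1) fS finite_subset by blast
  have sp: "span B = S" using B span_minimal[OF B(1) S] by blast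
  have ind: "\<And>u. (\<Sum>v\<in>B. scale (u v) v) = 0 \<Longrightarrow> \<forall>v\<in>B. u v = 0"
    using B(2) fB unfolding independent_explicit_finite_subsets by blast
  let ?f = "\<lambda>c. \<Sum>v\<in>B. scale (c v) v"
  have "bij_betw ?f (B \<rightarrow>\<^sub>E (UNIV::'a set)) (span B)"
  proof (rule bij_betwI')
    fix x y assume x: "x \<in> B \<rightarrow>\<^sub>E (UNIV::'a set)" and y: "y \<in> B \<rightarrow>\<^sub>E (UNIV::'a set)"
    show "(?f x = ?f y) = (x = y)"
    proof
      assume e: "?f x = ?f y"
      have "(\<Sum>v\<in>B. scale (x v - y v) v) = 0"
        using e by (simp add: scale_left_diff_distrib sum_subtractf)
      hence "\<forall>v\<in>B. x v - y v = 0" by (rule ind)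
      thus "x = y" using x y by (simp add: PiE_def extensional_def fun_eq_iff) (metis)
    qed simp
  next
    fix x assume "x \<in> B \<rightarrow>\<^sub>E (UNIV::'a set)" thus "?f x \<in> span B"
      by (simp add: span_base span_scale span_sum)
  next
    fix y assume "y \<in> span B"
    then obtain u where u: "y = (\<Sum>v\<in>B. scale (u v) v)" using span_finite[OF fB] by auto
    have "restrict u B \<in> B \<rightarrow>\<^sub>E (UNIV::'a set)" by simp
    moreover have "y = ?f (restrict u B)" unfolding u by (rule sum.cong) simp_all
    ultimately show "\<exists>x\<in>B \<rightarrow>\<^sub>E (UNIV::'a set). y = ?f x" by blast
  qed
  hence "card (span B) = card (B \<rightarrow>\<^sub>E (UNIV::'a set))" by (simp add: bij_betw_same_card)
  also have "\<dots> = card (UNIV::'a set) ^ card B" using fB by (simp add: card_PiE)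
  finally show ?thesis by (simp only: sp B(4))
qed
end

lemma core:
  fixes A B :: "(nat \<Rightarrow> 'a::field) \<Rightarrow> (nat \<Rightarrow> 'a)"
    and qa qb :: "(nat \<Rightarrow> 'a) \<Rightarrow> 'q::ab_group_add" and E :: "'q \<Rightarrow> 'q"
  assumes fin: "finite (UNIV::'a set)" and nn: "n' \<le> n"
    and Ai: "\<And>u. u \<in> Cpm n \<Longrightarrow> A u \<in> Cpm n" and Bi: "\<And>u. u \<in> Cpm n \<Longrightarrow> B u \<in> Cpm n"
    and Aadd: "\<And>u v. u \<in> Cpm n \<Longrightarrow> v \<in> Cpm n \<Longrightarrow> A (u + v) = A u + A v"
    and Badd: "\<And>u v. u \<in> Cpm n \<Longrightarrow> v \<in> Cpm n \<Longrightarrow> B (u + v) = B u + B v"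
    and AB: "\<And>u. u \<in> Cpm n \<Longrightarrow> A (B u) = 0" and BA: "\<And>u. u \<in> Cpm n \<Longrightarrow> B (A u) = 0"
    and gA: "\<And>u. u \<in> Hi n n' \<Longrightarrow> A u = 0 \<Longrightarrow> u = 0"
    and gB: "\<And>u. u \<in> Hi n n' \<Longrightarrow> B u = 0 \<Longrightarrow> u = 0"
    and qaadd: "\<And>u v. u \<in> Cpm n' \<Longrightarrow> v \<in> Cpm n' \<Longrightarrow> qa (u + v) = qa u + qa v"
    and qbadd: "\<And>u v. u \<in> Cpm n' \<Longrightarrow> v \<in> Cpm n' \<Longrightarrow> qb (u + v) = qb u + qb v"
    and ker: "\<And>u w. u \<in> Cpm n' \<Longrightarrow> w \<in> Cpm n' \<Longrightarrow>
       qa u + qb w = 0 \<longleftrightarrow> u \<in> trunc n' ` B ` Hi n n' \<and> w \<in> trunc n' ` A ` Hi n n'"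
    and E: "\<And>u. u \<in> Cpm n' \<Longrightarrow> E (qa u) = qb (trunc n' (A u))"
  shows "card (qa ` Cpm n') * card (UNIV::'a set) ^ (n - n') = card (UNIV::'a set) ^ n'"
    "card {q \<in> qa ` Cpm n'. E q = 0} * card (UNIV::'a set) ^ (n - n') = card {u \<in> Cpm n. A u = 0}"
    "card (E ` qa ` Cpm n') * card (UNIV::'a set) ^ (n - n') = card (A ` Cpm n)"
proof -
  let ?H = "Hi n n' :: (nat \<Rightarrow> 'a) set"
  let ?t = "trunc n' :: (nat \<Rightarrow> 'a) \<Rightarrow> _"
  let ?N = "card (UNIV::'a set)"
  have Hn: "\<And>u. u \<in> ?H \<Longrightarrow> u \<in> Cpm n" by (rule Hi_Cpm)
  have n'n: "\<And>u. u \<in> Cpm n' \<Longrightarrow> u \<in> Cpm n" using nn Cpm_mono by blast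
  have A0: "A 0 = 0" using Aadd[of 0 0] by simp
  have B0: "B 0 = 0" using Badd[of 0 0] by simp
  have Adiff: "A (u - v) = A u - A v" if "u \<in> Cpm n" "v \<in> Cpm n" for u v
    using Aadd[OF Cpm_diff[OF that] that(2)] by (simp add: algebra_simps)
  have Bdiff: "B (u - v) = B u - B v" if "u \<in> Cpm n" "v \<in> Cpm n" for u v
    using Badd[OF Cpm_diff[OF that] that(2)] by (simp add: algebra_simps)
  have qa0: "qa 0 = 0" using qaadd[of 0 0] by simp
  have qb0: "qb 0 = 0" using qbadd[of 0 0] by simp
  have qadiff: "qa (u - v) = qa u - qa v" if "u \<in> Cpm n'" "v \<in> Cpm n'" for u v
    using qaadd[OF Cpm_diff[OF that] that(2)] by (simp add: algebra_simps)
  have qbdiff: "qb (u - v) = qb u - qb v" if "u \<in> Cpm n'" "v \<in> Cpm n'" for u v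
    using qbadd[OF Cpm_diff[OF that] that(2)] by (simp add: algebra_simps)
  have zA: "0 \<in> ?t ` A ` ?H" using A0 by (intro image_eqI[of _ _ 0]) (auto intro: image_eqI[of _ _ 0])
  have zB: "0 \<in> ?t ` B ` ?H" using B0 by (intro image_eqI[of _ _ 0]) (auto intro: image_eqI[of _ _ 0])
  have qaker: "qa u = 0 \<longleftrightarrow> u \<in> ?t ` B ` ?H" if "u \<in> Cpm n'" for u
    using ker[OF that Cpm_zero] qb0 zA by simp
  have qbker: "qb w = 0 \<longleftrightarrow> w \<in> ?t ` A ` ?H" if "w \<in> Cpm n'" for w
    using ker[OF Cpm_zero that] qa0 zB by simp
  have injA: "inj_on A ?H"
  proof (rule inj_onI)
    fix v v' assume v: "v \<in> ?H" "v' \<in> ?H" "A v = A v'"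
    hence "A (v - v') = 0" using Adiff Hn by simp
    thus "v = v'" using gA[OF Hi_diff[OF v(1,2)]] by simp
  qed
  have injB: "inj_on B ?H"
  proof (rule inj_onI)
    fix v v' assume v: "v \<in> ?H" "v' \<in> ?H" "B v = B v'"
    hence "B (v - v') = 0" using Bdiff Hn by simp
    thus "v = v'" using gB[OF Hi_diff[OF v(1,2)]] by simp
  qed
  have injtB: "inj_on (?t \<circ> B) ?H"
  proof (rule inj_onI)
    fix v v' assume v: "v \<in> ?H" "v' \<in> ?H" "(?t \<circ> B) v = (?t \<circ> B) v'"
    let ?w = "v - v'"
    have w: "?w \<in> ?H" using Hi_diff[OF v(1,2)] .
    have "?t (B ?w) = 0" using v Bdiff Hn by (simp add: trunc_diff)
    hence "B ?w \<in> ?H" using trunc0_Hi Bi Hn w by blast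
    moreover have "A (B ?w) = 0" using AB Hn w by blast
    ultimately have "B ?w = 0" using gA by blast
    thus "v = v'" using gB[OF w] by simp
  qed
  have cH: "card ?H = ?N ^ (n - n')" using card_Hi[OF fin] .
  have cSp: "card (?t ` B ` ?H) = ?N ^ (n - n')"
    using card_image[OF injtB] cH by (simp add: image_comp)
  have cAH: "card (A ` ?H) = ?N ^ (n - n')" using card_image[OF injA] cH by simp
  have cBH: "card (B ` ?H) = ?N ^ (n - n')" using card_image[OF injB] cH by simp
  have fCn: "finite (Cpm n :: (nat \<Rightarrow> 'a) set)" using finite_Cpm[OF fin] .
  have fCn': "finite (Cpm n' :: (nat \<Rightarrow> 'a) set)" using finite_Cpm[OF fin] .
  have "card (Cpm n' :: (nat \<Rightarrow> 'a) set) = card (qa ` Cpm n') * card {u \<in> Cpm n'. qa u = 0}"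
    by (rule card_additive[of "Cpm n'" qa, OF fCn' Cpm_add Cpm_diff qaadd])
  moreover have "{u \<in> Cpm n'. qa u = 0} = ?t ` B ` ?H" using qaker by auto
  ultimately have "card (Cpm n' :: (nat \<Rightarrow> 'a) set) = card (qa ` Cpm n') * ?N ^ (n - n')"
    using cSp by (simp only:)
  thus "card (qa ` Cpm n') * ?N ^ (n - n') = ?N ^ n'" using card_Cpm[OF fin, of n'] by simp
  let ?Y = "A ` Cpm n"
  let ?h = "\<lambda>y. qb (?t y)"
  have Yadd: "x + y \<in> ?Y" if "x \<in> ?Y" "y \<in> ?Y" for x y
    using that by (auto simp: Aadd[symmetric] intro!: imageI Cpm_add)
  have Ydiff: "x - y \<in> ?Y" if "x \<in> ?Y" "y \<in> ?Y" for x y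
    using that by (auto simp: Adiff[symmetric] intro!: imageI Cpm_diff)
  have hadd: "?h (x + y) = ?h x + ?h y" if "x \<in> ?Y" "y \<in> ?Y" for x y
    by (simp add: trunc_add qbadd)
  have "card ?Y = card (?h ` ?Y) * card {y \<in> ?Y. ?h y = 0}"
    by (rule card_additive[of ?Y ?h, OF finite_imageI[OF fCn] Yadd Ydiff hadd])
  moreover have "?h ` ?Y = E ` qa ` Cpm n'"
  proof (rule set_eqI, rule iffI)
    fix q assume "q \<in> ?h ` ?Y"
    then obtain u where u: "u \<in> Cpm n" "q = qb (?t (A u))" by auto
    let ?v = "u - ?t u"
    have v: "?v \<in> ?H" using Hi_rest[OF u(1)] .
    have tu: "?t u \<in> Cpm n'" by simp
    have "A u = A (?t u) + A ?v" using Aadd[OF n'n[OF tu] Hn[OF v]] by simp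
    hence "q = qb (?t (A (?t u))) + qb (?t (A ?v))" using u by (simp add: trunc_add qbadd)
    also have "qb (?t (A ?v)) = 0" using qbker v by auto
    finally have "q = E (qa (?t u))" using E[OF tu] by simp
    thus "q \<in> E ` qa ` Cpm n'" using tu by blast
  next
    fix q assume "q \<in> E ` qa ` Cpm n'"
    then obtain u where u: "u \<in> Cpm n'" "q = E (qa u)" by auto
    thus "q \<in> ?h ` ?Y" using E[OF u(1)] n'n by blast
  qed
  moreover have "{y \<in> ?Y. ?h y = 0} = A ` ?H"
  proof (rule set_eqI, rule iffI)
    fix y assume "y \<in> {y \<in> ?Y. ?h y = 0}"
    then obtain u where u: "u \<in> Cpm n" "y = A u" "qb (?t y) = 0" by auto
    then obtain v where v: "v \<in> ?H" "?t y = ?t (A v)" using qbker[of "?t y"] by auto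
    have yv: "y - A v \<in> ?H"
      using v u Ai Hn by (intro trunc0_Hi) (auto simp: trunc_diff intro: Cpm_diff)
    have "B (y - A v) = 0" using u v Ai Hn BA Bdiff by simp
    hence "y = A v" using gB[OF yv] by simp
    thus "y \<in> A ` ?H" using v by blast
  next
    fix y assume "y \<in> A ` ?H"
    then obtain v where v: "v \<in> ?H" "y = A v" by auto
    thus "y \<in> {y \<in> ?Y. ?h y = 0}" using qbker Hn by auto
  qed
  ultimately show "card (E ` qa ` Cpm n') * ?N ^ (n - n') = card (A ` Cpm n)"
    using cAH by simp
  let ?Kr = "{u \<in> Cpm n. A u = 0}"
  let ?k = "\<lambda>u. qa (?t u)"
  have Kadd: "x + y \<in> ?Kr" if "x \<in> ?Kr" "y \<in> ?Kr" for x y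
    using that by (auto simp: Aadd intro!: Cpm_add)
  have Kdiff: "x - y \<in> ?Kr" if "x \<in> ?Kr" "y \<in> ?Kr" for x y
    using that by (auto simp: Adiff intro!: Cpm_diff)
  have kadd: "?k (x + y) = ?k x + ?k y" if "x \<in> ?Kr" "y \<in> ?Kr" for x y
    by (simp add: trunc_add qaadd)
  have fK: "finite ?Kr" using fCn by simp
  have "card ?Kr = card (?k ` ?Kr) * card {y \<in> ?Kr. ?k y = 0}"
    by (rule card_additive[of ?Kr ?k, OF fK Kadd Kdiff kadd])
  moreover have "?k ` ?Kr = {q \<in> qa ` Cpm n'. E q = 0}"
  proof (rule set_eqI, rule iffI)
    fix q assume "q \<in> ?k ` ?Kr"
    then obtain u where u: "u \<in> Cpm n" "A u = 0" "q = qa (?t u)" by auto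
    let ?v = "u - ?t u"
    have v: "?v \<in> ?H" using Hi_rest[OF u(1)] .
    have tu: "?t u \<in> Cpm n'" by simp
    have "A u = A (?t u) + A ?v" using Aadd[OF n'n[OF tu] Hn[OF v]] by simp
    hence e1: "A (?t u) + A ?v = 0" using u(2) by simp
    have e2: "A (- ?v) + A ?v = 0" using Aadd[OF Hn[OF Hi_uminus[OF v]] Hn[OF v]] A0 by simp
    have "A (?t u) = A (- ?v)" using e1 e2 by (metis add_right_cancel)
    hence "E q = qb (?t (A (- ?v)))" using E[OF tu] u(3) by simp
    also have "\<dots> = 0" using qbker Hi_uminus[OF v] by auto
    finally show "q \<in> {q \<in> qa ` Cpm n'. E q = 0}" using u(3) tu by blast
  next
    fix q assume "q \<in> {q \<in> qa ` Cpm n'. E q = 0}"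
    then obtain u where u: "u \<in> Cpm n'" "q = qa u" "E q = 0" by auto
    have "qb (?t (A u)) = 0" using u E by simp
    then obtain v where v: "v \<in> ?H" "?t (A u) = ?t (A v)" using qbker[of "?t (A u)"] by auto
    have un: "u \<in> Cpm n" using n'n u(1) .
    have yv: "A u - A v \<in> ?H"
      using v un Ai Hn by (intro trunc0_Hi) (auto simp: trunc_diff intro: Cpm_diff)
    have "B (A u - A v) = 0" using un v Ai Hn BA Bdiff by simp
    hence "A u = A v" using gB[OF yv] by simp
    hence "A (u - v) = 0" using Adiff un Hn v by simp
    moreover have "?t (u - v) = u" using trunc_id[OF u(1)] trunc_Hi[OF v(1)] by (simp add: trunc_diff)
    ultimately show "q \<in> ?k ` ?Kr" using u(2) un Hn[OF v(1)]
      by (intro image_eqI[of _ _ "u - v"]) (auto intro: Cpm_diff)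
  qed
  moreover have "{y \<in> ?Kr. ?k y = 0} = B ` ?H"
  proof (rule set_eqI, rule iffI)
    fix u assume "u \<in> {y \<in> ?Kr. ?k y = 0}"
    hence u: "u \<in> Cpm n" "A u = 0" "qa (?t u) = 0" by auto
    then obtain v where v: "v \<in> ?H" "?t u = ?t (B v)" using qaker[of "?t u"] by auto
    have yv: "u - B v \<in> ?H"
      using v u Bi Hn by (intro trunc0_Hi) (auto simp: trunc_diff intro: Cpm_diff)
    have "A (u - B v) = 0" using u v Bi Hn AB Adiff by simp
    hence "u = B v" using gA[OF yv] by simp
    thus "u \<in> B ` ?H" using v by blast
  next
    fix u assume "u \<in> B ` ?H"
    then obtain v where v: "v \<in> ?H" "u = B v" by auto
    thus "u \<in> {y \<in> ?Kr. ?k y = 0}" using qaker Hn Bi AB by auto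
  qed
  ultimately show "card {q \<in> qa ` Cpm n'. E q = 0} * ?N ^ (n - n') = card {u \<in> Cpm n. A u = 0}"
    using cBH by simp
qed


lemma two_nz:
  assumes "card (UNIV::'a::field set) = D" "odd D"
  shows "(2::'a) \<noteq> 0"
proof
  assume t: "(2::'a) = 0"
  have fin: "finite (UNIV::'a set)" using assms by (metis card.infinite odd_pos less_irrefl)
  let ?f = "\<lambda>x::'a. x * x + x"
  have fadd: "?f (x + y) = ?f x + ?f y" for x y
  proof -
    have "?f (x + y) = ?f x + ?f y + 2 * x * y" by (simp add: algebra_simps)
    thus ?thesis using t by simp
  qed
  have "card (UNIV::'a set) = card (?f ` UNIV) * card {x\<in>UNIV. ?f x = 0}"
    by (rule card_additive[of UNIV ?f, OF fin _ _ fadd]) auto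
  moreover have "{x\<in>UNIV. ?f x = 0} = {0, -1::'a}"
  proof -
    have "?f x = 0 \<longleftrightarrow> x = 0 \<or> x = -1" for x :: 'a
    proof -
      have "?f x = 0 \<longleftrightarrow> x * (x + 1) = 0" by (simp add: algebra_simps)
      also have "\<dots> \<longleftrightarrow> x = 0 \<or> x = -1" by (simp add: eq_neg_iff_add_eq_0)
      finally show ?thesis .
    qed
    thus ?thesis by auto
  qed
  moreover have "card {0, -1::'a} = 2" by simp
  ultimately have "even (card (UNIV::'a set))" by simp
  thus False using assms by simp
qed

lemma vs_scaleF: "vector_space (scaleF :: 'a::field \<Rightarrow> (nat \<Rightarrow> 'a) \<Rightarrow> _)"
  by unfold_locales (simp_all add: scaleF_def fun_eq_iff algebra_simps)

lemma lin_img_subspace: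
  assumes vs: "vector_space s2"
    and V0: "x0 \<in> V" and s10: "s1 0 x0 \<in> V"
    and Vadd: "\<And>x y. x \<in> V \<Longrightarrow> y \<in> V \<Longrightarrow> x + y \<in> V"
    and Vsc: "\<And>c x. x \<in> V \<Longrightarrow> s1 c x \<in> V"
    and fadd: "\<And>x y. x \<in> V \<Longrightarrow> y \<in> V \<Longrightarrow> f (x + y) = f x + f y"
    and fsc: "\<And>c x. x \<in> V \<Longrightarrow> f (s1 c x) = s2 c (f x)"
  shows "module.subspace s2 (f ` V)"
proof -
  interpret v: vector_space s2 by (rule vs)
  have "0 \<in> f ` V" using fsc[OF V0, of 0] s10 by (metis v.scale_zero_left image_eqI)
  moreover have "\<forall>x\<in>f ` V. \<forall>y\<in>f ` V. x + y \<in> f ` V"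
  proof (intro ballI)
    fix a b assume "a \<in> f ` V" "b \<in> f ` V"
    then obtain x y where "x \<in> V" "y \<in> V" "a = f x" "b = f y" by auto
    thus "a + b \<in> f ` V" using fadd Vadd by (metis image_eqI)
  qed
  moreover have "\<forall>c. \<forall>x\<in>f ` V. s2 c x \<in> f ` V" using fsc Vsc by (auto simp flip: fsc intro!: imageI)
  ultimately show ?thesis unfolding v.subspace_def by blast
qed

lemma lin_ker_subspace:
  assumes vs1: "vector_space s1" and vs2: "vector_space s2"
    and sub: "module.subspace s1 V"
    and fadd: "\<And>x y. x \<in> V \<Longrightarrow> y \<in> V \<Longrightarrow> f (x + y) = f x + f y"
    and fsc: "\<And>c x. x \<in> V \<Longrightarrow> f (s1 c x) = s2 c (f x)"
  shows "module.subspace s1 {x \<in> V. f x = 0}"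
proof -
  interpret v1: vector_space s1 by (rule vs1)
  interpret v2: vector_space s2 by (rule vs2)
  have V0: "0 \<in> V" using sub v1.subspace_def by blast
  have "f 0 = 0" using fadd[OF V0 V0] by simp
  thus ?thesis using sub fadd fsc unfolding v1.subspace_def by auto
qed


lemma Ctot_pair: "u \<in> Cpm n \<Longrightarrow> w \<in> Cpm n \<Longrightarrow> (u, w) \<in> Ctot n"
  by (simp add: Ctot_def)

lemma scaleC_pair: "scaleC c (u, w) = (scaleF c u, scaleF c w)"
  by (simp add: scaleC_def)

lemma scaleF_zero[simp]: "scaleF (c::'a::field) 0 = 0"
  by (simp add: scaleF_def fun_eq_iff)

lemma dbl_zero: "(x::nat \<Rightarrow> 'a::field) + x = 0 \<Longrightarrow> (2::'a) \<noteq> 0 \<Longrightarrow> x = 0"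
proof -
  assume h: "x + x = 0" "(2::'a) \<noteq> 0"
  have "x i + x i = 0" for i using fun_cong[OF h(1), of i] by simp
  hence "2 * x i = 0" for i by (metis mult_2)
  hence "x i = 0" for i using h(2) by simp
  thus ?thesis by (simp add: fun_eq_iff)
qed

locale bop =
  fixes n :: nat and \<delta> :: "'a::field cvec \<Rightarrow> 'a cvec"
  assumes two: "(2::'a) \<noteq> 0" and bo: "boundary_op n \<delta>"
begin

lemma dC: "x \<in> Ctot n \<Longrightarrow> \<delta> x \<in> Ctot n" using bo unfolding boundary_op_def by blast
lemma dadd: "x \<in> Ctot n \<Longrightarrow> y \<in> Ctot n \<Longrightarrow> \<delta> (x + y) = \<delta> x + \<delta> y"
  using bo unfolding boundary_op_def linear_on_def by blast
lemma dsc: "x \<in> Ctot n \<Longrightarrow> \<delta> (scaleC c x) = scaleC c (\<delta> x)"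
  using bo unfolding boundary_op_def linear_on_def by blast
lemma dd: "x \<in> Ctot n \<Longrightarrow> \<delta> (\<delta> x) = 0"
  using bo unfolding boundary_op_def by blast
lemma anti: "x \<in> Ctot n \<Longrightarrow> \<delta> (Pop x) + Pop (\<delta> x) = 0"
  using bo unfolding boundary_op_def by blast

lemma fst0: assumes "u \<in> Cpm n" shows "fst (\<delta> (u, 0)) = 0"
proof -
  have "Pop (u, 0) = (u, 0)" by (simp add: Pop_def)
  hence "\<delta> (u, 0) + Pop (\<delta> (u, 0)) = 0" using anti[OF Ctot_pair[OF assms Cpm_zero]] by simp
  hence "fst (\<delta> (u, 0)) + fst (\<delta> (u, 0)) = 0" by (metis Pop_def fst_add fst_conv fst_zero)
  thus ?thesis using dbl_zero two by blast
qed

lemma snd0: assumes "w \<in> Cpm n" shows "snd (\<delta> (0, w)) = 0"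
proof -
  have "Pop (0, w) = scaleC (-1) (0, w)" by (simp add: Pop_def scaleC_pair scaleF_def fun_eq_iff)
  hence "\<delta> (scaleC (-1) (0, w)) + Pop (\<delta> (0, w)) = 0"
    using anti[OF Ctot_pair[OF Cpm_zero assms]] by simp
  hence "scaleC (-1) (\<delta> (0, w)) + Pop (\<delta> (0, w)) = 0"
    using dsc[OF Ctot_pair[OF Cpm_zero assms]] by simp
  hence "snd (scaleC (-1) (\<delta> (0, w))) + snd (Pop (\<delta> (0, w))) = 0" by (metis snd_add snd_zero)
  hence "- snd (\<delta> (0, w)) + - snd (\<delta> (0, w)) = 0"
    by (simp add: scaleC_def Pop_def scaleF_def fun_eq_iff)
  hence "snd (\<delta> (0, w)) + snd (\<delta> (0, w)) = 0" by (simp add: fun_eq_iff)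
  thus ?thesis using dbl_zero two by blast
qed

lemma dform: assumes "u \<in> Cpm n" "w \<in> Cpm n" shows "\<delta> (u, w) = (dpm \<delta> w, dmp \<delta> u)"
proof -
  have "\<delta> (u, w) = \<delta> ((u, 0) + (0, w))" by simp
  also have "\<dots> = \<delta> (u, 0) + \<delta> (0, w)"
    using dadd[OF Ctot_pair[OF assms(1) Cpm_zero] Ctot_pair[OF Cpm_zero assms(2)]] .
  also have "\<delta> (u, 0) = (0, dmp \<delta> u)" using fst0[OF assms(1)] by (simp add: dmp_def prod_eq_iff)
  also have "\<delta> (0, w) = (dpm \<delta> w, 0)" using snd0[OF assms(2)] by (simp add: dpm_def prod_eq_iff)
  finally show ?thesis by (simp add: prod_eq_iff fun_eq_iff)
qed

lemma Ai: "u \<in> Cpm n \<Longrightarrow> dmp \<delta> u \<in> Cpm n"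
  using dC[OF Ctot_pair[OF _ Cpm_zero]] by (simp add: dmp_def Ctot_def mem_Times_iff)
lemma Bi: "w \<in> Cpm n \<Longrightarrow> dpm \<delta> w \<in> Cpm n"
  using dC[OF Ctot_pair[OF Cpm_zero]] by (simp add: dpm_def Ctot_def mem_Times_iff)
lemma Aadd: "u \<in> Cpm n \<Longrightarrow> v \<in> Cpm n \<Longrightarrow> dmp \<delta> (u + v) = dmp \<delta> u + dmp \<delta> v"
  using dadd[OF Ctot_pair[OF _ Cpm_zero] Ctot_pair[OF _ Cpm_zero], of u v] by (simp add: dmp_def)
lemma Badd: "u \<in> Cpm n \<Longrightarrow> v \<in> Cpm n \<Longrightarrow> dpm \<delta> (u + v) = dpm \<delta> u + dpm \<delta> v"
  using dadd[OF Ctot_pair[OF Cpm_zero] Ctot_pair[OF Cpm_zero], of u v] by (simp add: dpm_def)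
lemma Asc: "u \<in> Cpm n \<Longrightarrow> dmp \<delta> (scaleF c u) = scaleF c (dmp \<delta> u)"
  using dsc[OF Ctot_pair[OF _ Cpm_zero], of u c] by (simp add: dmp_def scaleC_pair scaleC_def)
lemma Bsc: "u \<in> Cpm n \<Longrightarrow> dpm \<delta> (scaleF c u) = scaleF c (dpm \<delta> u)"
  using dsc[OF Ctot_pair[OF Cpm_zero], of u c] by (simp add: dpm_def scaleC_pair scaleC_def)
lemma A0: "dmp \<delta> 0 = 0" using Aadd[of 0 0] by simp
lemma B0: "dpm \<delta> 0 = 0" using Badd[of 0 0] by simp
lemma AB: "w \<in> Cpm n \<Longrightarrow> dmp \<delta> (dpm \<delta> w) = 0"
  using dd[OF Ctot_pair[OF Cpm_zero]] dform[OF Cpm_zero] dform[OF Bi Cpm_zero] A0 B0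
  by (simp add: prod_eq_iff)
lemma BA: "u \<in> Cpm n \<Longrightarrow> dpm \<delta> (dmp \<delta> u) = 0"
  using dd[OF Ctot_pair[OF _ Cpm_zero]] dform[OF _ Cpm_zero] dform[OF Cpm_zero Ai] A0 B0
  by (simp add: prod_eq_iff)

end





lemma Wproj_trunc: "Wproj n' x = (trunc n' (fst x), trunc n' (snd x))"
  by (simp add: Wproj_def trunc_def)

lemma pow_arith: "2 \<le> (N::nat) \<Longrightarrow> N ^ a * N ^ m = N ^ b \<Longrightarrow> int a = int b - int m"
proof -
  assume N: "2 \<le> N" and e: "N ^ a * N ^ m = N ^ b"
  have "N ^ (a + m) = N ^ b" using e by (simp add: power_add)
  hence "a + m = b" using N by (simp add: power_inject_exp)
  thus ?thesis by simp
qed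

lemma sub_img:
  assumes vs1: "vector_space s1" and vs2: "vector_space s2" and sub: "module.subspace s1 V"
    and fadd: "\<And>x y. x \<in> V \<Longrightarrow> y \<in> V \<Longrightarrow> f (x + y) = f x + f y"
    and fsc: "\<And>c x. x \<in> V \<Longrightarrow> f (s1 c x) = s2 c (f x)"
  shows "module.subspace s2 (f ` V)"
proof -
  interpret v1: vector_space s1 by (rule vs1)
  have V0: "0 \<in> V" and Vadd: "\<And>x y. x \<in> V \<Longrightarrow> y \<in> V \<Longrightarrow> x + y \<in> V"
    and Vsc: "\<And>c x. x \<in> V \<Longrightarrow> s1 c x \<in> V"
    using sub unfolding v1.subspace_def by blast+
  show ?thesis using vs2 V0 Vsc[OF V0] Vadd Vsc fadd fsc by (rule lin_img_subspace)
qed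

theorem lemma3:
  fixes D n n' :: nat
    and \<delta> :: "'a::field cvec \<Rightarrow> 'a cvec"
    and scaleQ :: "'a \<Rightarrow> 'q::ab_group_add \<Rightarrow> 'q"
    and \<pi> :: "'a cvec \<Rightarrow> 'q"
  assumes "prime D" and "odd D" and "card (UNIV :: 'a set) = D"
    and "n' \<le> n"
    and "good n n' \<delta>"
    and "quotient_map n n' \<delta> scaleQ \<pi>"
  shows "(int (vector_space.dim scaleQ (Vq_plus n' \<pi>)) = 2 * int n' - int n) \<and>
    (int (vector_space.dim scaleQ (Vq_minus n' \<pi>)) = 2 * int n' - int n) \<and>
    (int (vector_space.dim scaleQ {q \<in> Vq_plus n' \<pi>. dq_mp scaleQ n' \<delta> \<pi> q = 0})
           = int (vector_space.dim scaleF {u \<in> Cpm n. dmp \<delta> u = 0}) - (int n - int n')) \<and>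
    (int (vector_space.dim scaleQ (dq_mp scaleQ n' \<delta> \<pi> ` Vq_plus n' \<pi>))
           = int (vector_space.dim scaleF (dmp \<delta> ` Cpm n)) - (int n - int n')) \<and>
    (int (vector_space.dim scaleQ {q \<in> Vq_minus n' \<pi>. dq_pm scaleQ n' \<delta> \<pi> q = 0})
           = int (vector_space.dim scaleF {w \<in> Cpm n. dpm \<delta> w = 0}) - (int n - int n')) \<and>
    (int (vector_space.dim scaleQ (dq_pm scaleQ n' \<delta> \<pi> ` Vq_minus n' \<pi>))
           = int (vector_space.dim scaleF (dpm \<delta> ` Cpm n)) - (int n - int n'))"
proof -
  let ?t = "trunc n' :: (nat \<Rightarrow> 'a) \<Rightarrow> _"
  let ?H = "Hi n n' :: (nat \<Rightarrow> 'a) set"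
  let ?A = "dmp \<delta>" and ?B = "dpm \<delta>"
  have D2: "2 \<le> D" using assms(1) prime_ge_2_nat by blast
  have fin: "finite (UNIV::'a set)" using assms(3) D2 card.infinite by force
  have two: "(2::'a) \<noteq> 0" using two_nz assms(2,3) by blast
  have gd: "boundary_op n \<delta>"
    and g1: "\<And>u. u \<in> Cpm n \<Longrightarrow> (\<forall>i<n'. u i = 0) \<Longrightarrow> \<delta> (u, 0) = 0 \<Longrightarrow> u = 0"
    and g2: "\<And>w. w \<in> Cpm n \<Longrightarrow> (\<forall>i<n'. w i = 0) \<Longrightarrow> \<delta> (0, w) = 0 \<Longrightarrow> w = 0"
    using assms(5) unfolding good_def by blast+
  interpret b: bop n \<delta> by (rule bop.intro[OF two gd])
  have nn: "n' \<le> n" by fact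
  have n'n: "\<And>u. u \<in> Cpm n' \<Longrightarrow> u \<in> Cpm n" using nn Cpm_mono by blast
  have gA: "u = 0" if "u \<in> ?H" "?A u = 0" for u
  proof -
    have "\<delta> (u, 0) = 0" using b.dform[OF Hi_Cpm[OF that(1)] Cpm_zero] that b.B0 by (simp add: prod_eq_iff)
    thus ?thesis using g1 that(1) unfolding Hi_def by blast
  qed
  have gB: "w = 0" if "w \<in> ?H" "?B w = 0" for w
  proof -
    have "\<delta> (0, w) = 0" using b.dform[OF Cpm_zero Hi_Cpm[OF that(1)]] that b.A0 by (simp add: prod_eq_iff)
    thus ?thesis using g2 that(1) unfolding Hi_def by blast
  qed
  have Bdiff: "?B (u - v) = ?B u - ?B v" if "u \<in> Cpm n" "v \<in> Cpm n" for u v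
    using b.Badd[OF Cpm_diff[OF that] that(2)] by (simp add: algebra_simps)
  have Adiff: "?A (u - v) = ?A u - ?A v" if "u \<in> Cpm n" "v \<in> Cpm n" for u v
    using b.Aadd[OF Cpm_diff[OF that] that(2)] by (simp add: algebra_simps)
  have vsQ: "vector_space scaleQ" and linpi: "linear_on scaleC scaleQ (Vsp n') \<pi>"
    and surj: "\<pi> ` Vsp n' = UNIV" and kerpi: "\<And>x. x \<in> Vsp n' \<Longrightarrow> \<pi> x = 0 \<longleftrightarrow> x \<in> Sgt n n' \<delta>"
    using assms(6) unfolding quotient_map_def by blast+
  interpret vq: vector_space scaleQ by (rule vsQ)
  have Vsp_pair: "\<And>u w. u \<in> Cpm n' \<Longrightarrow> w \<in> Cpm n' \<Longrightarrow> (u, w) \<in> Vsp n'" by (simp add: Vsp_def)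
  have piadd: "\<And>x y. x \<in> Vsp n' \<Longrightarrow> y \<in> Vsp n' \<Longrightarrow> \<pi> (x + y) = \<pi> x + \<pi> y"
    using linpi unfolding linear_on_def by blast
  have pisc: "\<And>c x. x \<in> Vsp n' \<Longrightarrow> \<pi> (scaleC c x) = scaleQ c (\<pi> x)"
    using linpi unfolding linear_on_def by blast
  define p1 where "p1 = (\<lambda>u. \<pi> (u, 0))"
  define p2 where "p2 = (\<lambda>w. \<pi> (0, w))"
  have pisplit: "\<pi> (u, w) = p1 u + p2 w" if "u \<in> Cpm n'" "w \<in> Cpm n'" for u w
    using piadd[OF Vsp_pair[OF that(1) Cpm_zero] Vsp_pair[OF Cpm_zero that(2)]] by (simp add: p1_def p2_def)
  have p1add: "p1 (u + v) = p1 u + p1 v" if "u \<in> Cpm n'" "v \<in> Cpm n'" for u v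
    using piadd[OF Vsp_pair[OF that(1) Cpm_zero] Vsp_pair[OF that(2) Cpm_zero]] by (simp add: p1_def)
  have p2add: "p2 (u + v) = p2 u + p2 v" if "u \<in> Cpm n'" "v \<in> Cpm n'" for u v
    using piadd[OF Vsp_pair[OF Cpm_zero that(1)] Vsp_pair[OF Cpm_zero that(2)]] by (simp add: p2_def)
  have p1sc: "p1 (scaleF c u) = scaleQ c (p1 u)" if "u \<in> Cpm n'" for c u
    using pisc[OF Vsp_pair[OF that Cpm_zero], of c] by (simp add: p1_def scaleC_pair)
  have p2sc: "p2 (scaleF c u) = scaleQ c (p2 u)" if "u \<in> Cpm n'" for c u
    using pisc[OF Vsp_pair[OF Cpm_zero that], of c] by (simp add: p2_def scaleC_pair)
  have p10: "p1 0 = 0" using p1add[of 0 0] by simp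
  have p20: "p2 0 = 0" using p2add[of 0 0] by simp
  have p1diff: "p1 (u - v) = p1 u - p1 v" if "u \<in> Cpm n'" "v \<in> Cpm n'" for u v
    using p1add[OF Cpm_diff[OF that] that(2)] by (simp add: algebra_simps)
  have p2diff: "p2 (u - v) = p2 u - p2 v" if "u \<in> Cpm n'" "v \<in> Cpm n'" for u v
    using p2add[OF Cpm_diff[OF that] that(2)] by (simp add: algebra_simps)
  have Vgt_eq: "Vgt n n' = ?H \<times> ?H" by (auto simp: Vgt_def Hi_def Ctot_def)
  have "Sgt n n' \<delta> = (\<lambda>(v1, v2). (?t (?B v2), ?t (?A v1))) ` (?H \<times> ?H)"
    unfolding Sgt_def Vgt_eq image_image
    by (rule image_cong) (auto simp: b.dform Hi_Cpm Wproj_trunc)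
  hence Sgt_eq: "Sgt n n' \<delta> = (?t ` ?B ` ?H) \<times> (?t ` ?A ` ?H)" by auto
  have ker: "p1 u + p2 w = 0 \<longleftrightarrow> u \<in> ?t ` ?B ` ?H \<and> w \<in> ?t ` ?A ` ?H"
    if "u \<in> Cpm n'" "w \<in> Cpm n'" for u w
    using kerpi[OF Vsp_pair[OF that]] pisplit[OF that] Sgt_eq by simp
  have zA: "0 \<in> ?t ` ?A ` ?H" using b.A0 by (intro image_eqI[of _ _ 0]) (auto intro: image_eqI[of _ _ 0])
  have zB: "0 \<in> ?t ` ?B ` ?H" using b.B0 by (intro image_eqI[of _ _ 0]) (auto intro: image_eqI[of _ _ 0])
  have p1ker: "p1 u = 0" if "u \<in> Cpm n'" "u \<in> ?t ` ?B ` ?H" for u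
    using ker[OF that(1) Cpm_zero] p20 zA that(2) by simp
  have p2ker: "p2 w = 0" if "w \<in> Cpm n'" "w \<in> ?t ` ?A ` ?H" for w
    using ker[OF Cpm_zero that(1)] p10 zB that(2) by simp
  have cross1: "?t (?B x) \<in> ?t ` ?B ` ?H" if xx: "x \<in> ?t ` ?A ` ?H" for x
  proof -
    obtain v where v: "v \<in> ?H" "x = ?t (?A v)" using xx by auto
    let ?y = "?A v - ?t (?A v)"
    have y: "?y \<in> ?H" using Hi_rest[OF b.Ai[OF Hi_Cpm[OF v(1)]]] .
    have my: "- ?y \<in> ?H" using Hi_uminus[OF y] .
    have "?B x = ?B (?A v - ?y)" using v by simp
    also have "\<dots> = ?B (?A v) - ?B ?y" by (rule Bdiff[OF b.Ai[OF Hi_Cpm[OF v(1)]] Hi_Cpm[OF y]])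
    also have "\<dots> = - ?B ?y" using b.BA[OF Hi_Cpm[OF v(1)]] by simp
    also have "\<dots> = ?B (- ?y)" using Bdiff[OF Cpm_zero Hi_Cpm[OF y]] b.B0 by simp
    finally show ?thesis using my by blast
  qed
  have cross2: "?t (?A x) \<in> ?t ` ?A ` ?H" if xx: "x \<in> ?t ` ?B ` ?H" for x
  proof -
    obtain v where v: "v \<in> ?H" "x = ?t (?B v)" using xx by auto
    let ?y = "?B v - ?t (?B v)"
    have y: "?y \<in> ?H" using Hi_rest[OF b.Bi[OF Hi_Cpm[OF v(1)]]] .
    have my: "- ?y \<in> ?H" using Hi_uminus[OF y] .
    have "?A x = ?A (?B v - ?y)" using v by simp
    also have "\<dots> = ?A (?B v) - ?A ?y" by (rule Adiff[OF b.Bi[OF Hi_Cpm[OF v(1)]] Hi_Cpm[OF y]])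
    also have "\<dots> = - ?A ?y" using b.AB[OF Hi_Cpm[OF v(1)]] by simp
    also have "\<dots> = ?A (- ?y)" using Adiff[OF Cpm_zero Hi_Cpm[OF y]] b.A0 by simp
    finally show ?thesis using my by blast
  qed
  have rep: "rep n' \<pi> q \<in> Vsp n' \<and> \<pi> (rep n' \<pi> q) = q" for q
  proof -
    have "\<exists>x. x \<in> Vsp n' \<and> \<pi> x = q" using surj by (metis UNIV_I imageE)
    thus ?thesis unfolding rep_def by (rule someI_ex)
  qed
  have repr: "\<exists>r1 r2. rep n' \<pi> (p1 u + p2 w) = (r1, r2) \<and> r1 \<in> Cpm n' \<and> r2 \<in> Cpm n' \<and>
      p1 r1 = p1 u \<and> p2 r2 = p2 w \<and> r2 - w \<in> ?t ` ?A ` ?H \<and> r1 - u \<in> ?t ` ?B ` ?H"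
    if uw: "u \<in> Cpm n'" "w \<in> Cpm n'" for u w
  proof -
    obtain r1 r2 where r: "rep n' \<pi> (p1 u + p2 w) = (r1, r2)" by (cases "rep n' \<pi> (p1 u + p2 w)")
    have rC: "r1 \<in> Cpm n'" "r2 \<in> Cpm n'" using rep[of "p1 u + p2 w"] r by (auto simp: Vsp_def)
    have "p1 r1 + p2 r2 = p1 u + p2 w" using rep[of "p1 u + p2 w"] r pisplit[OF rC] by simp
    moreover have "p1 (r1 - u) + p2 (r2 - w) = (p1 r1 + p2 r2) - (p1 u + p2 w)"
      unfolding p1diff[OF rC(1) uw(1)] p2diff[OF rC(2) uw(2)] by (simp add: algebra_simps)
    ultimately have "p1 (r1 - u) + p2 (r2 - w) = 0" by simp
    hence k: "r1 - u \<in> ?t ` ?B ` ?H" "r2 - w \<in> ?t ` ?A ` ?H"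
      using ker[OF Cpm_diff[OF rC(1) uw(1)] Cpm_diff[OF rC(2) uw(2)]] by auto
    have "p1 (r1 - u) = 0" using p1ker[OF Cpm_diff[OF rC(1) uw(1)] k(1)] .
    hence e1: "p1 r1 = p1 u" using p1diff[OF rC(1) uw(1)] by simp
    have "p2 (r2 - w) = 0" using p2ker[OF Cpm_diff[OF rC(2) uw(2)] k(2)] .
    hence e2: "p2 r2 = p2 w" using p2diff[OF rC(2) uw(2)] by simp
    show ?thesis using r rC e1 e2 k by blast
  qed
  have Pq_form: "Pq n' \<pi> (p1 u + p2 w) = p1 u - p2 w" if uw: "u \<in> Cpm n'" "w \<in> Cpm n'" for u w
  proof -
    obtain r1 r2 where r: "rep n' \<pi> (p1 u + p2 w) = (r1, r2)" "r1 \<in> Cpm n'" "r2 \<in> Cpm n'"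
      "p1 r1 = p1 u" "p2 r2 = p2 w" using repr[OF uw] by blast
    have "Pq n' \<pi> (p1 u + p2 w) = \<pi> (?t r1, ?t (- r2))"
      by (simp add: Pq_def phi_def r(1) Pop_def Wproj_trunc)
    also have "\<dots> = \<pi> (r1, - r2)" using trunc_id[OF r(2)] trunc_id[OF Cpm_uminus[OF r(3)]] by simp
    also have "\<dots> = p1 r1 + p2 (- r2)" using pisplit[OF r(2) Cpm_uminus[OF r(3)]] .
    also have "p2 (- r2) = - p2 r2" using p2diff[OF Cpm_zero r(3)] p20 by simp
    finally show ?thesis using r by simp
  qed
  have dq_form: "dq n' \<delta> \<pi> (p1 u + p2 w) = p1 (?t (?B w)) + p2 (?t (?A u))"
    if uw: "u \<in> Cpm n'" "w \<in> Cpm n'" for u w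
  proof -
    obtain r1 r2 where r: "rep n' \<pi> (p1 u + p2 w) = (r1, r2)" "r1 \<in> Cpm n'" "r2 \<in> Cpm n'"
      "r2 - w \<in> ?t ` ?A ` ?H" "r1 - u \<in> ?t ` ?B ` ?H" using repr[OF uw] by blast
    have rn: "r1 \<in> Cpm n" "r2 \<in> Cpm n" using r n'n by auto
    have un: "u \<in> Cpm n" "w \<in> Cpm n" using uw n'n by auto
    have "dq n' \<delta> \<pi> (p1 u + p2 w) = \<pi> (?t (?B r2), ?t (?A r1))"
      by (simp add: dq_def phi_def r(1) b.dform[OF rn] Wproj_trunc)
    also have "\<dots> = p1 (?t (?B r2)) + p2 (?t (?A r1))" by (rule pisplit) simp_all
    also have "p1 (?t (?B r2)) = p1 (?t (?B w))"
    proof -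
      have "?t (?B r2) = ?t (?B w) + ?t (?B (r2 - w))" using Bdiff[OF rn(2) un(2)]
        by (simp add: trunc_diff)
      moreover have "p1 (?t (?B (r2 - w))) = 0" using p1ker[OF trunc_Cpm cross1[OF r(4)]] .
      ultimately show ?thesis using p1add[OF trunc_Cpm trunc_Cpm] by simp
    qed
    also have "p2 (?t (?A r1)) = p2 (?t (?A u))"
    proof -
      have "?t (?A r1) = ?t (?A u) + ?t (?A (r1 - u))" using Adiff[OF rn(1) un(1)]
        by (simp add: trunc_diff)
      moreover have "p2 (?t (?A (r1 - u))) = 0" using p2ker[OF trunc_Cpm cross2[OF r(5)]] .
      ultimately show ?thesis using p2add[OF trunc_Cpm trunc_Cpm] by simp
    qed
    finally show ?thesis .
  qed
  have half: "scaleQ (inverse 2) (x + x) = x" for x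
  proof -
    have "x + x = scaleQ 2 x" by (metis one_add_one vq.scale_left_distrib vq.scale_one)
    hence "scaleQ (inverse 2) (x + x) = scaleQ (inverse 2 * 2) x" by simp
    thus ?thesis using two by simp
  qed
  have pm_form: "proj_minus scaleQ n' \<pi> (p1 u + p2 w) = p2 w" if "u \<in> Cpm n'" "w \<in> Cpm n'" for u w
    using half[of "p2 w"] by (simp add: proj_minus_def Pq_form[OF that] algebra_simps)
  have pp_form: "proj_plus scaleQ n' \<pi> (p1 u + p2 w) = p1 u" if "u \<in> Cpm n'" "w \<in> Cpm n'" for u w
    using half[of "p1 u"] by (simp add: proj_plus_def Pq_form[OF that] algebra_simps)
  have decomp: "\<exists>u w. u \<in> Cpm n' \<and> w \<in> Cpm n' \<and> q = p1 u + p2 w" for q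
  proof -
    obtain r1 r2 where r: "rep n' \<pi> q = (r1, r2)" by (cases "rep n' \<pi> q")
    have rC: "r1 \<in> Cpm n'" "r2 \<in> Cpm n'" using rep[of q] r by (auto simp: Vsp_def)
    thus ?thesis using rep[of q] r pisplit[OF rC] by metis
  qed
  have dbl0: "x = 0" if "x + x = 0" for x :: 'q using half[of x] that by simp
  have Vp: "Vq_plus n' \<pi> = p1 ` Cpm n'"
  proof (rule set_eqI, rule iffI)
    fix q assume q: "q \<in> Vq_plus n' \<pi>"
    obtain u w where uw: "u \<in> Cpm n'" "w \<in> Cpm n'" "q = p1 u + p2 w" using decomp by blast
    have "p1 u - p2 w = p1 u + p2 w" using q Pq_form[OF uw(1,2)] uw(3) by (simp add: Vq_plus_def)
    hence "p2 w + p2 w = 0" by (simp add: algebra_simps)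
    hence "p2 w = 0" by (rule dbl0)
    thus "q \<in> p1 ` Cpm n'" using uw by simp
  next
    fix q assume "q \<in> p1 ` Cpm n'"
    then obtain u where u: "u \<in> Cpm n'" "q = p1 u" by auto
    thus "q \<in> Vq_plus n' \<pi>" using Pq_form[OF u(1) Cpm_zero] p20 by (simp add: Vq_plus_def)
  qed
  have Vm: "Vq_minus n' \<pi> = p2 ` Cpm n'"
  proof (rule set_eqI, rule iffI)
    fix q assume q: "q \<in> Vq_minus n' \<pi>"
    obtain u w where uw: "u \<in> Cpm n'" "w \<in> Cpm n'" "q = p1 u + p2 w" using decomp by blast
    have "p1 u - p2 w = - (p1 u + p2 w)" using q Pq_form[OF uw(1,2)] uw(3) by (simp add: Vq_minus_def)
    hence "p1 u = - p1 u" by (simp add: algebra_simps)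
    hence "p1 u + p1 u = 0" by (simp only: eq_neg_iff_add_eq_0)
    hence "p1 u = 0" by (rule dbl0)
    thus "q \<in> p2 ` Cpm n'" using uw by simp
  next
    fix q assume "q \<in> p2 ` Cpm n'"
    then obtain w where w: "w \<in> Cpm n'" "q = p2 w" by auto
    thus "q \<in> Vq_minus n' \<pi>" using Pq_form[OF Cpm_zero w(1)] p10 by (simp add: Vq_minus_def)
  qed
  have E1: "dq_mp scaleQ n' \<delta> \<pi> (p1 u) = p2 (?t (?A u))" if u: "u \<in> Cpm n'" for u
  proof -
    have "dq n' \<delta> \<pi> (p1 u) = p1 0 + p2 (?t (?A u))"
      using dq_form[OF u Cpm_zero] p20 b.B0 by simp
    thus ?thesis using pm_form[OF Cpm_zero trunc_Cpm] by (simp add: dq_mp_def)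
  qed
  have E2: "dq_pm scaleQ n' \<delta> \<pi> (p2 w) = p1 (?t (?B w))" if w: "w \<in> Cpm n'" for w
  proof -
    have "dq n' \<delta> \<pi> (p2 w) = p1 (?t (?B w)) + p2 0"
      using dq_form[OF Cpm_zero w] p10 b.A0 by simp
    thus ?thesis using pp_form[OF trunc_Cpm Cpm_zero] by (simp add: dq_pm_def)
  qed
  have ker2: "p2 u + p1 w = 0 \<longleftrightarrow> u \<in> ?t ` ?A ` ?H \<and> w \<in> ?t ` ?B ` ?H"
    if "u \<in> Cpm n'" "w \<in> Cpm n'" for u w
    using ker[OF that(2) that(1)] by (simp add: add.commute conj_commute)
  note c1 = core[where A="dmp \<delta>" and B="dpm \<delta>" and qa=p1 and qb=p2 and E="dq_mp scaleQ n' \<delta> \<pi>",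
      OF fin nn b.Ai b.Bi b.Aadd b.Badd b.AB b.BA gA gB p1add p2add ker E1]
  note c2 = core[where A="dpm \<delta>" and B="dmp \<delta>" and qa=p2 and qb=p1 and E="dq_pm scaleQ n' \<delta> \<pi>",
      OF fin nn b.Bi b.Ai b.Badd b.Aadd b.BA b.AB gB gA p2add p1add ker2 E2]
  have vsF: "vector_space (scaleF :: 'a \<Rightarrow> (nat \<Rightarrow> 'a) \<Rightarrow> _)" by (rule vs_scaleF)
  interpret vf: vector_space "scaleF :: 'a \<Rightarrow> (nat \<Rightarrow> 'a) \<Rightarrow> _" by (rule vsF)
  have subC: "vf.subspace (Cpm k)" for k
    unfolding vf.subspace_def by (auto intro: Cpm_add Cpm_scale)
  have fC: "finite (Cpm k :: (nat \<Rightarrow> 'a) set)" for k using finite_Cpm[OF fin] .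
  have tsc: "?t (scaleF c u) = scaleF c (?t u)" for c u by (simp add: trunc_def scaleF_def fun_eq_iff)
  let ?N = "card (UNIV :: 'a set)"
  have cardF: "card S = ?N ^ vf.dim S" if "vf.subspace S" "finite S" for S
    using vf.card_subspace_pow[OF fin that] .
  have cardQ: "card S = ?N ^ vq.dim S" if "vq.subspace S" "finite S" for S
    using vq.card_subspace_pow[OF fin that] .
  have N2: "2 \<le> ?N" using D2 assms(3) by simp
  have sP: "vq.subspace (p1 ` Cpm n')"
    by (rule sub_img[where V="Cpm n'" and f=p1, OF vsF vsQ subC p1add p1sc])
  have sM: "vq.subspace (p2 ` Cpm n')"
    by (rule sub_img[where V="Cpm n'" and f=p2, OF vsF vsQ subC p2add p2sc])
  have E1add: "dq_mp scaleQ n' \<delta> \<pi> (x + y) = dq_mp scaleQ n' \<delta> \<pi> x + dq_mp scaleQ n' \<delta> \<pi> y"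
    if xy: "x \<in> p1 ` Cpm n'" "y \<in> p1 ` Cpm n'" for x y
  proof -
    obtain u v where uv: "u \<in> Cpm n'" "v \<in> Cpm n'" "x = p1 u" "y = p1 v" using xy by auto
    have "x + y = p1 (u + v)" using p1add uv by simp
    thus ?thesis using E1 uv Cpm_add[OF uv(1,2)] b.Aadd[OF n'n n'n] p2add[OF trunc_Cpm trunc_Cpm]
      by (simp add: trunc_add)
  qed
  have E1sc: "dq_mp scaleQ n' \<delta> \<pi> (scaleQ c x) = scaleQ c (dq_mp scaleQ n' \<delta> \<pi> x)"
    if xx: "x \<in> p1 ` Cpm n'" for c x
  proof -
    obtain u where u: "u \<in> Cpm n'" "x = p1 u" using xx by auto
    have "scaleQ c x = p1 (scaleF c u)" using p1sc u by simp
    thus ?thesis using E1 u Cpm_scale[OF u(1)] b.Asc[OF n'n[OF u(1)]] p2sc[OF trunc_Cpm] tsc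
      by simp
  qed
  have E2add: "dq_pm scaleQ n' \<delta> \<pi> (x + y) = dq_pm scaleQ n' \<delta> \<pi> x + dq_pm scaleQ n' \<delta> \<pi> y"
    if xy: "x \<in> p2 ` Cpm n'" "y \<in> p2 ` Cpm n'" for x y
  proof -
    obtain u v where uv: "u \<in> Cpm n'" "v \<in> Cpm n'" "x = p2 u" "y = p2 v" using xy by auto
    have "x + y = p2 (u + v)" using p2add uv by simp
    thus ?thesis using E2 uv Cpm_add[OF uv(1,2)] b.Badd[OF n'n n'n] p1add[OF trunc_Cpm trunc_Cpm]
      by (simp add: trunc_add)
  qed
  have E2sc: "dq_pm scaleQ n' \<delta> \<pi> (scaleQ c x) = scaleQ c (dq_pm scaleQ n' \<delta> \<pi> x)"
    if xx: "x \<in> p2 ` Cpm n'" for c x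
  proof -
    obtain u where u: "u \<in> Cpm n'" "x = p2 u" using xx by auto
    have "scaleQ c x = p2 (scaleF c u)" using p2sc u by simp
    thus ?thesis using E2 u Cpm_scale[OF u(1)] b.Bsc[OF n'n[OF u(1)]] p1sc[OF trunc_Cpm] tsc
      by simp
  qed
  have sK1: "vq.subspace {q \<in> p1 ` Cpm n'. dq_mp scaleQ n' \<delta> \<pi> q = 0}"
    by (rule lin_ker_subspace[where V="p1 ` Cpm n'" and f="dq_mp scaleQ n' \<delta> \<pi>", OF vsQ vsQ sP E1add E1sc])
  have sI1: "vq.subspace (dq_mp scaleQ n' \<delta> \<pi> ` p1 ` Cpm n')"
    by (rule sub_img[where V="p1 ` Cpm n'" and f="dq_mp scaleQ n' \<delta> \<pi>", OF vsQ vsQ sP E1add E1sc])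
  have sK2: "vq.subspace {q \<in> p2 ` Cpm n'. dq_pm scaleQ n' \<delta> \<pi> q = 0}"
    by (rule lin_ker_subspace[where V="p2 ` Cpm n'" and f="dq_pm scaleQ n' \<delta> \<pi>", OF vsQ vsQ sM E2add E2sc])
  have sI2: "vq.subspace (dq_pm scaleQ n' \<delta> \<pi> ` p2 ` Cpm n')"
    by (rule sub_img[where V="p2 ` Cpm n'" and f="dq_pm scaleQ n' \<delta> \<pi>", OF vsQ vsQ sM E2add E2sc])
  have sKA: "vf.subspace {u \<in> Cpm n. ?A u = 0}"
    by (rule lin_ker_subspace[where V="Cpm n" and f="dmp \<delta>", OF vsF vsF subC b.Aadd b.Asc])
  have sKB: "vf.subspace {u \<in> Cpm n. ?B u = 0}"
    by (rule lin_ker_subspace[where V="Cpm n" and f="dpm \<delta>", OF vsF vsF subC b.Badd b.Bsc])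
  have sIA: "vf.subspace (?A ` Cpm n)"
    by (rule sub_img[where V="Cpm n" and f="dmp \<delta>", OF vsF vsF subC b.Aadd b.Asc])
  have sIB: "vf.subspace (?B ` Cpm n)"
    by (rule sub_img[where V="Cpm n" and f="dpm \<delta>", OF vsF vsF subC b.Badd b.Bsc])
  have fP: "finite (p1 ` Cpm n')" "finite (p2 ` Cpm n')" using fC by simp_all
  have fK1: "finite {q \<in> p1 ` Cpm n'. dq_mp scaleQ n' \<delta> \<pi> q = 0}"
    by (rule finite_subset[OF _ fP(1)]) blast
  have fK2: "finite {q \<in> p2 ` Cpm n'. dq_pm scaleQ n' \<delta> \<pi> q = 0}"
    by (rule finite_subset[OF _ fP(2)]) blast
  have fI1: "finite (dq_mp scaleQ n' \<delta> \<pi> ` p1 ` Cpm n')" using fP(1) by (rule finite_imageI)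
  have fI2: "finite (dq_pm scaleQ n' \<delta> \<pi> ` p2 ` Cpm n')" using fP(2) by (rule finite_imageI)
  have fKA: "finite {u \<in> Cpm n. ?A u = 0}" by (rule finite_subset[OF _ fC]) blast
  have fKB: "finite {u \<in> Cpm n. ?B u = 0}" by (rule finite_subset[OF _ fC]) blast
  have fIA: "finite (?A ` Cpm n)" using fC by (rule finite_imageI)
  have fIB: "finite (?B ` Cpm n)" using fC by (rule finite_imageI)
  have i1: "int (vq.dim (p1 ` Cpm n')) = int n' - int (n - n')"
    by (rule pow_arith[OF N2 c1(1)[unfolded cardQ[OF sP fP(1)]]])
  have i2: "int (vq.dim (p2 ` Cpm n')) = int n' - int (n - n')"
    by (rule pow_arith[OF N2 c2(1)[unfolded cardQ[OF sM fP(2)]]])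
  have i3: "int (vq.dim {q \<in> p1 ` Cpm n'. dq_mp scaleQ n' \<delta> \<pi> q = 0})
      = int (vf.dim {u \<in> Cpm n. ?A u = 0}) - int (n - n')"
    by (rule pow_arith[OF N2 c1(2)[unfolded cardQ[OF sK1 fK1] cardF[OF sKA fKA]]])
  have i4: "int (vq.dim (dq_mp scaleQ n' \<delta> \<pi> ` p1 ` Cpm n'))
      = int (vf.dim (?A ` Cpm n)) - int (n - n')"
    by (rule pow_arith[OF N2 c1(3)[unfolded cardQ[OF sI1 fI1] cardF[OF sIA fIA]]])
  have i5: "int (vq.dim {q \<in> p2 ` Cpm n'. dq_pm scaleQ n' \<delta> \<pi> q = 0})
      = int (vf.dim {u \<in> Cpm n. ?B u = 0}) - int (n - n')"
    by (rule pow_arith[OF N2 c2(2)[unfolded cardQ[OF sK2 fK2] cardF[OF sKB fKB]]])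
  have i6: "int (vq.dim (dq_pm scaleQ n' \<delta> \<pi> ` p2 ` Cpm n'))
      = int (vf.dim (?B ` Cpm n)) - int (n - n')"
    by (rule pow_arith[OF N2 c2(3)[unfolded cardQ[OF sI2 fI2] cardF[OF sIB fIB]]])
  have mm: "int (n - n') = int n - int n'" using nn by simp
  show ?thesis unfolding Vp Vm using i1 i2 i3 i4 i5 i6 mm by linarith
qed


end
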